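(* Let $(\Gamma,\Lambda)$ be a Hecke pair with $\Lambda$ isomorphic to $\mathbb{Z}^n$. Then $\mathbb{R}^n$ is an engulfing group of $(\Gamma,\Lambda)$.
   Context: A Hecke pair $(\Gamma,\Lambda)$ is a group $\Gamma$ with a commensurated subgroup $\Lambda$ (commensurable, i.e. finite index intersection, with all its conjugates). A locally compact group $E$ is an engulfing group of $(\Gamma,\Lambda)$ if there are a homomorphism $\rho:\Lambda\to E$ with finite kernel and discrete cocompact image, and a homomorphism $\Delta:\Gamma\to\mathrm{Aut}(E)$ extending $h\mapsto$ conjugation by $\rho(h)$ on $\Lambda$, such that for every $g\in\Gamma$, $\Delta(g)(\rho(h))=\rho(ghg^{-1})$ for all $h$ in some finite index subgroup of $\Lambda$. *)

theory Defs
  imports "HOL-Analysis.Analysis" "HOL-Algebra.Algebra"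
begin

definition finite_index_in :: "('g, 'b) monoid_scheme \<Rightarrow> 'g set \<Rightarrow> 'g set \<Rightarrow> bool" where
  "finite_index_in G H K \<longleftrightarrow>
     subgroup H (G\<lparr>carrier := K\<rparr>) \<and> finite (rcosets\<^bsub>G\<lparr>carrier := K\<rparr>\<^esub> H)"

definition hecke_pair :: "('g, 'b) monoid_scheme \<Rightarrow> 'g set \<Rightarrow> bool" where
  "hecke_pair G L \<longleftrightarrow> group G \<and> subgroup L G \<and>
     (\<forall>g \<in> carrier G.
        finite_index_in G (L \<inter> (g <#\<^bsub>G\<^esub> L #>\<^bsub>G\<^esub> inv\<^bsub>G\<^esub> g)) L \<and>
        finite_index_in G (L \<inter> (g <#\<^bsub>G\<^esub> L #>\<^bsub>G\<^esub> inv\<^bsub>G\<^esub> g)) (g <#\<^bsub>G\<^esub> L #>\<^bsub>G\<^esub> inv\<^bsub>G\<^esub> g))"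

definition top_aut :: "('e::topological_group_add \<Rightarrow> 'e) set" where
  "top_aut = {f. bij f \<and> (\<forall>x y. f (x + y) = f x + f y) \<and>
                 continuous_on UNIV f \<and> continuous_on UNIV (inv_into UNIV f)}"

definition discrete_subset :: "'e::topological_space set \<Rightarrow> bool" where
  "discrete_subset S \<longleftrightarrow> (\<forall>x\<in>S. \<exists>U. open U \<and> U \<inter> S = {x})"

definition cocompact_subgroup :: "'e::topological_group_add set \<Rightarrow> bool" where
  "cocompact_subgroup S \<longleftrightarrow> (\<exists>K. compact K \<and> (\<Union>s\<in>S. (\<lambda>k. k + s) ` K) = UNIV)"

text \<open>Engulfing group: the locally compact group is the whole type 'e.\<close>
definition engulfing_group :: "('g, 'b) monoid_scheme \<Rightarrow> 'g set \<Rightarrow> 'e::topological_group_add itself \<Rightarrow> bool" where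
  "engulfing_group G L E \<longleftrightarrow>
     locally_compact_space (euclidean :: 'e topology) \<and>
     (\<exists>(\<rho> :: 'g \<Rightarrow> 'e) (\<Delta> :: 'g \<Rightarrow> 'e \<Rightarrow> 'e).
        (\<forall>h1\<in>L. \<forall>h2\<in>L. \<rho> (h1 \<otimes>\<^bsub>G\<^esub> h2) = \<rho> h1 + \<rho> h2) \<and>
        finite {h\<in>L. \<rho> h = 0} \<and>
        discrete_subset (\<rho> ` L) \<and> cocompact_subgroup (\<rho> ` L) \<and>
        (\<forall>g\<in>carrier G. \<Delta> g \<in> top_aut) \<and>
        (\<forall>g1\<in>carrier G. \<forall>g2\<in>carrier G. \<Delta> (g1 \<otimes>\<^bsub>G\<^esub> g2) = \<Delta> g1 \<circ> \<Delta> g2) \<and>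
        (\<forall>h\<in>L. \<forall>x. \<Delta> h x = \<rho> h + x - \<rho> h) \<and>
        (\<forall>g\<in>carrier G. \<exists>L'. finite_index_in G L' L \<and>
            (\<forall>h\<in>L'. g \<otimes>\<^bsub>G\<^esub> h \<otimes>\<^bsub>G\<^esub> inv\<^bsub>G\<^esub> g \<in> L \<and>
                     \<Delta> g (\<rho> h) = \<rho> (g \<otimes>\<^bsub>G\<^esub> h \<otimes>\<^bsub>G\<^esub> inv\<^bsub>G\<^esub> g))))"

text \<open>The group Z^n, with n = CARD('n).\<close>
definition Zn_group :: "'n::finite itself \<Rightarrow> (int ^ 'n) monoid" where
  "Zn_group N = \<lparr>carrier = UNIV, monoid.mult = (+), one = 0\<rparr>"

end

theory Submission
  imports Defs
begin


definition vr :: "int^'n::finite \<Rightarrow> real^'n" where "vr a = (\<chi> i. real_of_int (a$i))"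

lemma vr_add: "vr (a + b) = vr a + vr b"
  by (simp add: vr_def vec_eq_iff)

lemma vr_nth: "vr a $ i = real_of_int (a $ i)"
  by (simp add: vr_def)

lemma vr_axis: "vr (axis i 1) = axis i 1"
  by (simp add: vr_def vec_eq_iff axis_def)

lemma vec_axis_sum: "(a::int^'n::finite) = (\<Sum>i\<in>UNIV. axis i (a$i))"
  by (simp add: vec_eq_iff axis_def)

lemma additive_expand:
  fixes f :: "int^'n::finite \<Rightarrow> 'b::real_vector"
  assumes add: "\<And>a b. f (a + b) = f a + f b"
  shows "f a = (\<Sum>i\<in>UNIV. real_of_int (a$i) *\<^sub>R f (axis i 1))"
proof -
  have f0: "f 0 = 0" using add[of 0 0] by simp
  have fsum: "f (sum g S) = (\<Sum>x\<in>S. f (g x))" for g :: "'n \<Rightarrow> int^'n" and S :: "'n set"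
  proof (induct S rule: infinite_finite_induct)
    case (infinite A) then show ?case by simp
  next
    case empty then show ?case by (simp only: sum.empty f0)
  next
    case (insert x F)
    have "f (sum g (insert x F)) = f (g x) + f (sum g F)"
      by (simp only: sum.insert[OF insert(1,2)] add)
    also have "\<dots> = (\<Sum>y\<in>insert x F. f (g y))"
      by (simp only: sum.insert[OF insert(1,2)] insert(3))
    finally show ?case .
  qed
  have ax0: "axis i (0::int) = 0" for i by (simp add: vec_eq_iff axis_def)
  have fax: "f (axis i k) = real_of_int k *\<^sub>R f (axis i 1)" for i k
  proof (induct k rule: int_induct[where k=0])
    case base then show ?case by (simp only: ax0 f0 of_int_0 scaleR_zero_left)
  next
    case (step1 k)
    have "axis i (k+1) = axis i k + axis i 1" by (simp add: vec_eq_iff axis_def)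
    then have "f (axis i (k+1)) = f (axis i k) + f (axis i 1)" by (simp only: add)
    then show ?case using step1 by (simp add: algebra_simps)
  next
    case (step2 k)
    have "axis i k = axis i (k - 1) + axis i 1" by (simp add: vec_eq_iff axis_def)
    then have "f (axis i k) = f (axis i (k - 1)) + f (axis i 1)" by (simp only: add)
    then show ?case using step2 by (simp add: algebra_simps)
  qed
  have "f a = f (\<Sum>i\<in>UNIV. axis i (a$i))" by (rule arg_cong[OF vec_axis_sum[of a]])
  also have "\<dots> = (\<Sum>i\<in>UNIV. f (axis i (a$i)))" by (rule fsum)
  also have "\<dots> = (\<Sum>i\<in>UNIV. real_of_int (a$i) *\<^sub>R f (axis i 1))" by (rule sum.cong[OF refl fax])
  finally show ?thesis .
qed

lemma linear_sumform: "linear (\<lambda>x::real^'n::finite. \<Sum>i\<in>UNIV. x$i *\<^sub>R (v i :: 'b::real_vector))"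
  by (rule linearI) (simp_all add: scaleR_add_left sum.distrib scaleR_sum_right)

lemma lin_eq_vr:
  fixes f g :: "real^'n::finite \<Rightarrow> real^'n"
  assumes "linear f" "linear g" "\<And>a. f (vr a) = g (vr a)"
  shows "f = g"
proof (rule linear_eq_stdbasis[OF assms(1,2)])
  fix b :: "real^'n" assume "b \<in> Basis"
  then obtain i where "b = axis i 1" by (auto simp: Basis_vec_def)
  then show "f b = g b" using assms(3)[of "axis i 1"] by (simp add: vr_axis)
qed



lemma pow_upd: "pow (G\<lparr>carrier := L\<rparr>) x (n::nat) = pow G x n"
  by (simp add: nat_pow_def)


lemma vr_inj: "vr a = vr b \<Longrightarrow> a = b"
  by (simp add: vec_eq_iff vr_nth)

lemma vr_discrete: "discrete_subset (range (vr :: int^'n::finite \<Rightarrow> real^'n))"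
  unfolding discrete_subset_def
proof
  fix x :: "real^'n" assume "x \<in> range vr"
  then obtain a where xa: "x = vr a" by blast
  have "ball x (1/2) \<inter> range vr = {x}"
  proof
    show "{x} \<subseteq> ball x (1/2) \<inter> range vr" using xa by auto
    show "ball x (1/2) \<inter> range vr \<subseteq> {x}"
    proof
      fix y assume "y \<in> ball x (1/2) \<inter> range vr"
      then obtain b where yb: "y = vr b" and d: "dist x y < 1/2" by auto
      have "a $ i = b $ i" for i
      proof -
        have "\<bar>(x - y) $ i\<bar> \<le> norm (x - y)" by (rule component_le_norm_cart)
        then have "\<bar>real_of_int (a$i) - real_of_int (b$i)\<bar> < 1/2"
          using d xa yb by (simp add: dist_norm vr_nth)
        then have "\<bar>a$i - b$i\<bar> < 1" by linarith
        then show ?thesis by linarith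
      qed
      then show "y \<in> {x}" using xa yb by (simp add: vec_eq_iff vr_nth)
    qed
  qed
  then show "\<exists>U. open U \<and> U \<inter> range vr = {x}" by blast
qed

lemma vr_cocompact: "cocompact_subgroup (range (vr :: int^'n::finite \<Rightarrow> real^'n))"
  unfolding cocompact_subgroup_def
proof (intro exI conjI)
  show "compact (cbox (0::real^'n) 1)" by (rule compact_cbox)
  show "(\<Union>s\<in>range vr. (\<lambda>k. k + s) ` cbox (0::real^'n) 1) = UNIV"
  proof -
    have "y \<in> (\<Union>s\<in>range vr. (\<lambda>k. k + s) ` cbox (0::real^'n) 1)" for y :: "real^'n"
    proof -
    define c where "c = (\<chi> i. \<lfloor>y$i\<rfloor>)"
    have "y - vr c \<in> cbox 0 1"
      unfolding mem_box_cart c_def by (simp add: vr_nth) linarith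
    then have "y \<in> (\<lambda>k. k + vr c) ` cbox 0 1" by (metis diff_add_cancel image_eqI)
    then show "y \<in> (\<Union>s\<in>range vr. (\<lambda>k. k + s) ` cbox 0 1)" by blast
    qed
    then show ?thesis by blast
  qed
qed

lemma lc_euclidean: "locally_compact_space (euclidean :: (real^'n::finite) topology)"
  unfolding locally_compact_space_def
proof
  fix x :: "real^'n"
  show "\<exists>U K. openin euclidean U \<and> compactin euclidean K \<and> x \<in> U \<and> U \<subseteq> K"
    by (rule exI[of _ "ball x 1"], rule exI[of _ "cball x 1"]) auto
qed

locale hsetup =
  fixes G :: "('g,'b) monoid_scheme" and L :: "'g set" and \<phi> :: "'g \<Rightarrow> int^'n::finite"
  assumes grp: "group G" and sub: "subgroup L G" and bij: "bij_betw \<phi> L UNIV"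
    and hom: "\<And>x y. x \<in> L \<Longrightarrow> y \<in> L \<Longrightarrow> \<phi> (x \<otimes>\<^bsub>G\<^esub> y) = \<phi> x + \<phi> y"
    and hk: "\<And>g. g \<in> carrier G \<Longrightarrow> finite_index_in G (L \<inter> (g <#\<^bsub>G\<^esub> L #>\<^bsub>G\<^esub> inv\<^bsub>G\<^esub> g)) L"
begin

interpretation G: group G by (rule grp)

lemma Lsub: "x \<in> L \<Longrightarrow> x \<in> carrier G"
  using sub subgroup.subset by blast

lemma pow_L: "x \<in> L \<Longrightarrow> x [^]\<^bsub>G\<^esub> (n::nat) \<in> L"
  by (induct n) (auto simp: subgroup.one_closed[OF sub] subgroup.m_closed[OF sub] Lsub)

lemma inj: "x \<in> L \<Longrightarrow> y \<in> L \<Longrightarrow> \<phi> x = \<phi> y \<Longrightarrow> x = y"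
  using bij unfolding bij_betw_def inj_on_def by blast

lemma comm: "x \<in> L \<Longrightarrow> y \<in> L \<Longrightarrow> x \<otimes>\<^bsub>G\<^esub> y = y \<otimes>\<^bsub>G\<^esub> x"
  by (rule inj) (auto simp: hom subgroup.m_closed[OF sub] add.commute)

lemma phi_one: "\<phi> \<one>\<^bsub>G\<^esub> = 0"
proof -
  have "\<phi> (\<one>\<^bsub>G\<^esub> \<otimes>\<^bsub>G\<^esub> \<one>\<^bsub>G\<^esub>) = \<phi> \<one>\<^bsub>G\<^esub> + \<phi> \<one>\<^bsub>G\<^esub>"
    using hom subgroup.one_closed[OF sub] by blast
  then show ?thesis by simp
qed

definition \<psi> where "\<psi> = inv_into L \<phi>"

lemma psi_L: "\<psi> a \<in> L"
  using bij unfolding \<psi>_def bij_betw_def by (metis UNIV_I inv_into_into)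

lemma phi_psi: "\<phi> (\<psi> a) = a"
  using bij unfolding \<psi>_def bij_betw_def by (simp add: f_inv_into_f)

lemma psi_phi: "x \<in> L \<Longrightarrow> \<psi> (\<phi> x) = x"
  using bij unfolding \<psi>_def bij_betw_def by simp

lemma psi_add: "\<psi> (a + b) = \<psi> a \<otimes>\<^bsub>G\<^esub> \<psi> b"
  by (rule inj) (auto simp: psi_L phi_psi hom subgroup.m_closed[OF sub])

lemma cancel_l: "g \<in> carrier G \<Longrightarrow> z \<in> carrier G \<Longrightarrow> inv\<^bsub>G\<^esub> g \<otimes>\<^bsub>G\<^esub> (g \<otimes>\<^bsub>G\<^esub> z) = z"
  by (simp add: G.m_assoc[symmetric])

lemma conj_pow: "g \<in> carrier G \<Longrightarrow> h \<in> carrier G \<Longrightarrow>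
   g \<otimes>\<^bsub>G\<^esub> h [^]\<^bsub>G\<^esub> (k::nat) \<otimes>\<^bsub>G\<^esub> inv\<^bsub>G\<^esub> g = (g \<otimes>\<^bsub>G\<^esub> h \<otimes>\<^bsub>G\<^esub> inv\<^bsub>G\<^esub> g) [^]\<^bsub>G\<^esub> k"
proof (induct k)
  case 0 then show ?case by simp
next
  case (Suc k)
  have "g \<otimes>\<^bsub>G\<^esub> h [^]\<^bsub>G\<^esub> Suc k \<otimes>\<^bsub>G\<^esub> inv\<^bsub>G\<^esub> g
     = (g \<otimes>\<^bsub>G\<^esub> h [^]\<^bsub>G\<^esub> k \<otimes>\<^bsub>G\<^esub> inv\<^bsub>G\<^esub> g) \<otimes>\<^bsub>G\<^esub> (g \<otimes>\<^bsub>G\<^esub> h \<otimes>\<^bsub>G\<^esub> inv\<^bsub>G\<^esub> g)"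
    using Suc.prems by (simp add: G.m_assoc G.nat_pow_Suc2 G.nat_pow_Suc cancel_l)
  then show ?case using Suc by (simp add: G.nat_pow_Suc)
qed

lemma conj_mult: "g \<in> carrier G \<Longrightarrow> x \<in> carrier G \<Longrightarrow> y \<in> carrier G \<Longrightarrow>
   g \<otimes>\<^bsub>G\<^esub> (x \<otimes>\<^bsub>G\<^esub> y) \<otimes>\<^bsub>G\<^esub> inv\<^bsub>G\<^esub> g = (g \<otimes>\<^bsub>G\<^esub> x \<otimes>\<^bsub>G\<^esub> inv\<^bsub>G\<^esub> g) \<otimes>\<^bsub>G\<^esub> (g \<otimes>\<^bsub>G\<^esub> y \<otimes>\<^bsub>G\<^esub> inv\<^bsub>G\<^esub> g)"
  by (simp add: G.m_assoc cancel_l)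

lemma coset_mem: "x \<in> (a <#\<^bsub>G\<^esub> L #>\<^bsub>G\<^esub> b) \<Longrightarrow> \<exists>l\<in>L. x = a \<otimes>\<^bsub>G\<^esub> l \<otimes>\<^bsub>G\<^esub> b"
  by (auto simp: l_coset_def r_coset_def)

lemma H_group: "group (G\<lparr>carrier := L\<rparr>)"
  by (rule G.subgroup_imp_group[OF sub])

lemma H_comm: "comm_group (G\<lparr>carrier := L\<rparr>)"
  by (rule group.group_comm_groupI[OF H_group]) (auto simp: comm)

lemma exists_m: assumes g: "g \<in> carrier G"
  shows "\<exists>m>0. \<forall>h\<in>L. g \<otimes>\<^bsub>G\<^esub> h [^]\<^bsub>G\<^esub> (m::nat) \<otimes>\<^bsub>G\<^esub> inv\<^bsub>G\<^esub> g \<in> L"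
proof -
  define H where "H = G\<lparr>carrier := L\<rparr>"
  define K where "K = L \<inter> (inv\<^bsub>G\<^esub> g <#\<^bsub>G\<^esub> L #>\<^bsub>G\<^esub> inv\<^bsub>G\<^esub> (inv\<^bsub>G\<^esub> g))"
  have fi: "subgroup K H" "finite (rcosets\<^bsub>H\<^esub> K)"
    using hk[of "inv\<^bsub>G\<^esub> g"] g unfolding finite_index_in_def K_def H_def by auto
  interpret Hc: comm_group H unfolding H_def by (rule H_comm)
  have nK: "normal K H" by (rule Hc.subgroup_imp_normal[OF fi(1)])
  interpret nK: normal K H by (rule nK)
  interpret Q: group "H Mod K" by (rule nK.factorgroup_is_group)
  define N where "N = order (H Mod K)"
  have Kin: "K \<in> rcosets\<^bsub>H\<^esub> K"
    using Hc.rcosetsI[of K "\<one>\<^bsub>H\<^esub>"] nK.subset by (simp add: Hc.coset_mult_one)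
  have Npos: "N > 0" unfolding N_def order_def FactGroup_def using fi(2) Kin
    by (simp add: card_gt_0_iff) blast
  have "\<forall>h\<in>L. g \<otimes>\<^bsub>G\<^esub> h [^]\<^bsub>G\<^esub> N \<otimes>\<^bsub>G\<^esub> inv\<^bsub>G\<^esub> g \<in> L"
  proof
    fix h assume h: "h \<in> L"
    have hH: "h \<in> carrier H" using h by (simp add: H_def)
    have "K #>\<^bsub>H\<^esub> (h [^]\<^bsub>H\<^esub> N) = (K #>\<^bsub>H\<^esub> h) [^]\<^bsub>H Mod K\<^esub> N"
      using hom_nat_pow[OF nK.r_coset_hom_Mod hH Hc.is_group Q.is_group] .
    also have "\<dots> = K"
    proof -
      have "K #>\<^bsub>H\<^esub> h \<in> carrier (H Mod K)" using hH
        by (simp add: FactGroup_def Hc.rcosetsI nK.subset)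
      then show ?thesis using Q.pow_order_eq_1 unfolding N_def by simp
    qed
    finally have e: "K #>\<^bsub>H\<^esub> (h [^]\<^bsub>H\<^esub> N) = K" .
    have "h [^]\<^bsub>H\<^esub> N \<in> K" using Hc.rcos_self[OF _ fi(1), of "h [^]\<^bsub>H\<^esub> N"] hH e by simp
    then have "h [^]\<^bsub>G\<^esub> N \<in> inv\<^bsub>G\<^esub> g <#\<^bsub>G\<^esub> L #>\<^bsub>G\<^esub> g"
      unfolding K_def H_def pow_upd using g by simp
    then obtain l where l: "l \<in> L" "h [^]\<^bsub>G\<^esub> N = inv\<^bsub>G\<^esub> g \<otimes>\<^bsub>G\<^esub> l \<otimes>\<^bsub>G\<^esub> g"
      using coset_mem by blast
    have "g \<otimes>\<^bsub>G\<^esub> h [^]\<^bsub>G\<^esub> N \<otimes>\<^bsub>G\<^esub> inv\<^bsub>G\<^esub> g = l"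
      using l g Lsub[OF l(1)] by (simp add: G.m_assoc[symmetric]) (simp add: G.m_assoc)
    then show "g \<otimes>\<^bsub>G\<^esub> h [^]\<^bsub>G\<^esub> N \<otimes>\<^bsub>G\<^esub> inv\<^bsub>G\<^esub> g \<in> L" using l by simp
  qed
  then show ?thesis using Npos by blast
qed


definition mm where "mm g = (SOME m::nat. m > 0 \<and> (\<forall>h\<in>L. g \<otimes>\<^bsub>G\<^esub> h [^]\<^bsub>G\<^esub> m \<otimes>\<^bsub>G\<^esub> inv\<^bsub>G\<^esub> g \<in> L))"

lemma mm_prop: assumes "g \<in> carrier G"
  shows "mm g > 0" "h \<in> L \<Longrightarrow> g \<otimes>\<^bsub>G\<^esub> h [^]\<^bsub>G\<^esub> mm g \<otimes>\<^bsub>G\<^esub> inv\<^bsub>G\<^esub> g \<in> L"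
proof -
  have "mm g > 0 \<and> (\<forall>h\<in>L. g \<otimes>\<^bsub>G\<^esub> h [^]\<^bsub>G\<^esub> mm g \<otimes>\<^bsub>G\<^esub> inv\<^bsub>G\<^esub> g \<in> L)"
    unfolding mm_def using someI_ex[OF exists_m[OF assms]] .
  then show "mm g > 0" "h \<in> L \<Longrightarrow> g \<otimes>\<^bsub>G\<^esub> h [^]\<^bsub>G\<^esub> mm g \<otimes>\<^bsub>G\<^esub> inv\<^bsub>G\<^esub> g \<in> L" by auto
qed

definition T where "T g a = (1 / real (mm g)) *\<^sub>R vr (\<phi> (g \<otimes>\<^bsub>G\<^esub> \<psi> a [^]\<^bsub>G\<^esub> mm g \<otimes>\<^bsub>G\<^esub> inv\<^bsub>G\<^esub> g))"

definition D where "D g x = (\<Sum>i\<in>UNIV. x$i *\<^sub>R T g (axis i 1))"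

lemma phi_pow: "x \<in> L \<Longrightarrow> vr (\<phi> (x [^]\<^bsub>G\<^esub> (k::nat))) = real k *\<^sub>R vr (\<phi> x)"
proof (induct k)
  case 0 then show ?case by (simp add: phi_one vr_def vec_eq_iff)
next
  case (Suc k)
  have "vr (\<phi> (x [^]\<^bsub>G\<^esub> Suc k)) = vr (\<phi> (x [^]\<^bsub>G\<^esub> k)) + vr (\<phi> x)"
    using Suc.prems by (simp add: G.nat_pow_Suc hom pow_L vr_add)
  then show ?case using Suc by (simp add: algebra_simps)
qed

lemma T_add: assumes g: "g \<in> carrier G" shows "T g (a + b) = T g a + T g b"
proof -
  let ?m = "mm g"
  have ca: "\<psi> a \<in> carrier G" "\<psi> b \<in> carrier G" using psi_L Lsub by auto
  have "\<psi> (a + b) [^]\<^bsub>G\<^esub> ?m = \<psi> a [^]\<^bsub>G\<^esub> ?m \<otimes>\<^bsub>G\<^esub> \<psi> b [^]\<^bsub>G\<^esub> ?m"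
    unfolding psi_add by (rule G.pow_mult_distrib[OF comm[OF psi_L psi_L] ca])
  then have "g \<otimes>\<^bsub>G\<^esub> \<psi> (a + b) [^]\<^bsub>G\<^esub> ?m \<otimes>\<^bsub>G\<^esub> inv\<^bsub>G\<^esub> g
     = (g \<otimes>\<^bsub>G\<^esub> \<psi> a [^]\<^bsub>G\<^esub> ?m \<otimes>\<^bsub>G\<^esub> inv\<^bsub>G\<^esub> g) \<otimes>\<^bsub>G\<^esub> (g \<otimes>\<^bsub>G\<^esub> \<psi> b [^]\<^bsub>G\<^esub> ?m \<otimes>\<^bsub>G\<^esub> inv\<^bsub>G\<^esub> g)"
    using conj_mult g ca by simp
  then show ?thesis unfolding T_def
    using mm_prop(2)[OF g psi_L, of a] mm_prop(2)[OF g psi_L, of b]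
    by (simp add: hom vr_add scaleR_add_right)
qed

lemma D_vr: assumes g: "g \<in> carrier G" shows "D g (vr a) = T g a"
  unfolding D_def vr_nth using additive_expand[of "T g" a] T_add[OF g] by simp

lemma P1: assumes g: "g \<in> carrier G" and h: "h \<in> L" and c: "g \<otimes>\<^bsub>G\<^esub> h \<otimes>\<^bsub>G\<^esub> inv\<^bsub>G\<^esub> g \<in> L"
  shows "D g (vr (\<phi> h)) = vr (\<phi> (g \<otimes>\<^bsub>G\<^esub> h \<otimes>\<^bsub>G\<^esub> inv\<^bsub>G\<^esub> g))"
proof -
  have "D g (vr (\<phi> h)) = (1 / real (mm g)) *\<^sub>R vr (\<phi> ((g \<otimes>\<^bsub>G\<^esub> h \<otimes>\<^bsub>G\<^esub> inv\<^bsub>G\<^esub> g) [^]\<^bsub>G\<^esub> mm g))"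
    unfolding D_vr[OF g] T_def psi_phi[OF h] using conj_pow[OF g Lsub[OF h]] by simp
  also have "\<dots> = vr (\<phi> (g \<otimes>\<^bsub>G\<^esub> h \<otimes>\<^bsub>G\<^esub> inv\<^bsub>G\<^esub> g))"
    using phi_pow[OF c] mm_prop(1)[OF g] by simp
  finally show ?thesis .
qed

lemma D_linear: "linear (D g)"
  unfolding D_def[abs_def] by (rule linear_sumform)

lemma D_L: assumes h: "h \<in> L" shows "D h = id"
proof (rule lin_eq_vr[OF D_linear])
  show "linear (id :: real^'n \<Rightarrow> _)" by (rule linear_id)
  fix a
  have hc: "h \<in> carrier G" using Lsub h by simp
  have e: "h \<otimes>\<^bsub>G\<^esub> \<psi> a \<otimes>\<^bsub>G\<^esub> inv\<^bsub>G\<^esub> h = \<psi> a"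
    using comm[OF h psi_L, of a] hc Lsub[OF psi_L] by (simp add: G.m_assoc)
  show "D h (vr a) = id (vr a)"
    using P1[OF hc psi_L, of a] e psi_L by (simp add: phi_psi)
qed

lemma D_mult: assumes g1: "g1 \<in> carrier G" and g2: "g2 \<in> carrier G"
  shows "D (g1 \<otimes>\<^bsub>G\<^esub> g2) = D g1 \<circ> D g2"
proof (rule lin_eq_vr[OF D_linear])
  show "linear (D g1 \<circ> D g2)" by (rule linear_compose[OF D_linear D_linear])
  fix a
  define h where "h = \<psi> a"
  have h: "h \<in> L" "h \<in> carrier G" unfolding h_def using psi_L Lsub by auto
  define m1 where "m1 = mm g1"
  define m2 where "m2 = mm g2"
  define k where "k = m2 * m1"
  have kpos: "k > 0" unfolding k_def m1_def m2_def using mm_prop(1) g1 g2 by simp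
  define x where "x = g2 \<otimes>\<^bsub>G\<^esub> h [^]\<^bsub>G\<^esub> m2 \<otimes>\<^bsub>G\<^esub> inv\<^bsub>G\<^esub> g2"
  have xL: "x \<in> L" unfolding x_def m2_def using mm_prop(2)[OF g2 h(1)] .
  have xc: "x \<in> carrier G" using Lsub xL .
  have hk: "h [^]\<^bsub>G\<^esub> k \<in> L" using pow_L h by simp
  have e2: "g2 \<otimes>\<^bsub>G\<^esub> h [^]\<^bsub>G\<^esub> k \<otimes>\<^bsub>G\<^esub> inv\<^bsub>G\<^esub> g2 = x [^]\<^bsub>G\<^esub> m1"
    unfolding k_def x_def using conj_pow[OF g2, of "h [^]\<^bsub>G\<^esub> m2" m1] h(2)
    by (simp add: G.nat_pow_pow)
  have c2: "g2 \<otimes>\<^bsub>G\<^esub> h [^]\<^bsub>G\<^esub> k \<otimes>\<^bsub>G\<^esub> inv\<^bsub>G\<^esub> g2 \<in> L" unfolding e2 using pow_L xL by simp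
  have c1: "g1 \<otimes>\<^bsub>G\<^esub> x [^]\<^bsub>G\<^esub> m1 \<otimes>\<^bsub>G\<^esub> inv\<^bsub>G\<^esub> g1 \<in> L" unfolding m1_def using mm_prop(2)[OF g1 xL] .
  have g12: "g1 \<otimes>\<^bsub>G\<^esub> g2 \<in> carrier G" using g1 g2 by simp
  have e12: "(g1 \<otimes>\<^bsub>G\<^esub> g2) \<otimes>\<^bsub>G\<^esub> h [^]\<^bsub>G\<^esub> k \<otimes>\<^bsub>G\<^esub> inv\<^bsub>G\<^esub> (g1 \<otimes>\<^bsub>G\<^esub> g2)
      = g1 \<otimes>\<^bsub>G\<^esub> (g2 \<otimes>\<^bsub>G\<^esub> h [^]\<^bsub>G\<^esub> k \<otimes>\<^bsub>G\<^esub> inv\<^bsub>G\<^esub> g2) \<otimes>\<^bsub>G\<^esub> inv\<^bsub>G\<^esub> g1"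
    using g1 g2 h(2) by (simp add: G.m_assoc G.inv_mult_group)
  have "D (g1 \<otimes>\<^bsub>G\<^esub> g2) (vr (\<phi> (h [^]\<^bsub>G\<^esub> k))) = (D g1 \<circ> D g2) (vr (\<phi> (h [^]\<^bsub>G\<^esub> k)))"
  proof -
    have c12: "(g1 \<otimes>\<^bsub>G\<^esub> g2) \<otimes>\<^bsub>G\<^esub> h [^]\<^bsub>G\<^esub> k \<otimes>\<^bsub>G\<^esub> inv\<^bsub>G\<^esub> (g1 \<otimes>\<^bsub>G\<^esub> g2) \<in> L"
      unfolding e12 e2 by (rule c1)
    have "D (g1 \<otimes>\<^bsub>G\<^esub> g2) (vr (\<phi> (h [^]\<^bsub>G\<^esub> k))) = vr (\<phi> (g1 \<otimes>\<^bsub>G\<^esub> x [^]\<^bsub>G\<^esub> m1 \<otimes>\<^bsub>G\<^esub> inv\<^bsub>G\<^esub> g1))"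
      unfolding P1[OF g12 hk c12] e12 e2 ..
    moreover have "(D g1 \<circ> D g2) (vr (\<phi> (h [^]\<^bsub>G\<^esub> k))) = vr (\<phi> (g1 \<otimes>\<^bsub>G\<^esub> x [^]\<^bsub>G\<^esub> m1 \<otimes>\<^bsub>G\<^esub> inv\<^bsub>G\<^esub> g1))"
      unfolding o_def P1[OF g2 hk c2] e2 P1[OF g1 pow_L[OF xL] c1] ..
    ultimately show ?thesis by simp
  qed
  moreover have va: "vr (\<phi> (h [^]\<^bsub>G\<^esub> k)) = real k *\<^sub>R vr a"
    using phi_pow[OF h(1), of k] unfolding h_def phi_psi .
  ultimately have "D (g1 \<otimes>\<^bsub>G\<^esub> g2) (real k *\<^sub>R vr a) = (D g1 \<circ> D g2) (real k *\<^sub>R vr a)"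
    by (simp only:)
  then have "real k *\<^sub>R D (g1 \<otimes>\<^bsub>G\<^esub> g2) (vr a) = real k *\<^sub>R (D g1 \<circ> D g2) (vr a)"
    by (simp only: linear_cmul[OF D_linear] linear_cmul[OF linear_compose[OF D_linear D_linear]])
  then show "D (g1 \<otimes>\<^bsub>G\<^esub> g2) (vr a) = (D g1 \<circ> D g2) (vr a)" using kpos by simp
qed

lemma D_aut: assumes g: "g \<in> carrier G" shows "D g \<in> top_aut"
proof -
  have gi: "inv\<^bsub>G\<^esub> g \<in> carrier G" using g by simp
  have one: "D \<one>\<^bsub>G\<^esub> = id" using D_L subgroup.one_closed[OF sub] by simp
  have c1: "D g \<circ> D (inv\<^bsub>G\<^esub> g) = id" using D_mult[OF g gi] g one by (metis G.r_inv)
  have c2: "D (inv\<^bsub>G\<^esub> g) \<circ> D g = id" using D_mult[OF gi g] g one by (metis G.l_inv)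
  have b: "bij (D g)" using c1 c2 by (metis o_bij)
  have iv: "inv_into UNIV (D g) = D (inv\<^bsub>G\<^esub> g)" using inv_unique_comp[OF c1 c2] by simp
  have cont: "continuous_on UNIV (D x)" for x
    using D_linear[of x] by (simp add: linear_continuous_on linear_conv_bounded_linear)
  show ?thesis unfolding top_aut_def using b iv cont linear_add[OF D_linear[of g]] by simp
qed

end

theorem proposition3p6:
  fixes G :: "('g, 'b) monoid_scheme" and L :: "'g set"
  assumes "hecke_pair G L"
    and "G\<lparr>carrier := L\<rparr> \<cong> Zn_group TYPE('n::finite)"
  shows "engulfing_group G L TYPE(real ^ 'n)"
proof -
  have grp: "group G" and sub: "subgroup L G"
    and hk: "\<And>g. g \<in> carrier G \<Longrightarrow> finite_index_in G (L \<inter> (g <#\<^bsub>G\<^esub> L #>\<^bsub>G\<^esub> inv\<^bsub>G\<^esub> g)) L"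
    using assms(1) unfolding hecke_pair_def by auto
  obtain \<phi> :: "'g \<Rightarrow> int^'n" where "\<phi> \<in> iso (G\<lparr>carrier := L\<rparr>) (Zn_group TYPE('n))"
    using assms(2) unfolding is_iso_def by blast
  then have bij: "bij_betw \<phi> L UNIV" and hom: "\<And>x y. x \<in> L \<Longrightarrow> y \<in> L \<Longrightarrow> \<phi> (x \<otimes>\<^bsub>G\<^esub> y) = \<phi> x + \<phi> y"
    unfolding iso_def hom_def Zn_group_def by auto
  interpret hsetup G L \<phi> using grp sub bij hom hk unfolding hsetup_def by blast
  interpret G: group G by (rule grp)
  have rng: "(\<lambda>h. vr (\<phi> h)) ` L = range vr"
    using bij unfolding bij_betw_def by (metis image_image)
  show ?thesis unfolding engulfing_group_def
  proof (intro conjI exI)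
    show "locally_compact_space (euclidean :: (real^'n) topology)" by (rule lc_euclidean)
    show "\<forall>h1\<in>L. \<forall>h2\<in>L. vr (\<phi> (h1 \<otimes>\<^bsub>G\<^esub> h2)) = vr (\<phi> h1) + vr (\<phi> h2)"
      by (simp add: hom vr_add)
    have "{h \<in> L. vr (\<phi> h) = 0} \<subseteq> {\<one>\<^bsub>G\<^esub>}"
    proof
      fix h assume h: "h \<in> {h \<in> L. vr (\<phi> h) = 0}"
      then have "vr (\<phi> h) = vr (\<phi> \<one>\<^bsub>G\<^esub>)" by (simp add: phi_one vr_def vec_eq_iff)
      then have "\<phi> h = \<phi> \<one>\<^bsub>G\<^esub>" by (rule vr_inj)
      then show "h \<in> {\<one>\<^bsub>G\<^esub>}" using h inj subgroup.one_closed[OF sub] by auto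
    qed
    then show "finite {h \<in> L. vr (\<phi> h) = 0}" by (rule finite_subset) simp
    show "discrete_subset ((\<lambda>h. vr (\<phi> h)) ` L)" unfolding rng by (rule vr_discrete)
    show "cocompact_subgroup ((\<lambda>h. vr (\<phi> h)) ` L)" unfolding rng by (rule vr_cocompact)
    show "\<forall>g\<in>carrier G. D g \<in> top_aut" using D_aut by blast
    show "\<forall>g1\<in>carrier G. \<forall>g2\<in>carrier G. D (g1 \<otimes>\<^bsub>G\<^esub> g2) = D g1 \<circ> D g2" using D_mult by blast
    show "\<forall>h\<in>L. \<forall>x. D h x = vr (\<phi> h) + x - vr (\<phi> h)" using D_L by simp
    show "\<forall>g\<in>carrier G. \<exists>L'. finite_index_in G L' L \<and>
            (\<forall>h\<in>L'. g \<otimes>\<^bsub>G\<^esub> h \<otimes>\<^bsub>G\<^esub> inv\<^bsub>G\<^esub> g \<in> L \<and>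
                     D g (vr (\<phi> h)) = vr (\<phi> (g \<otimes>\<^bsub>G\<^esub> h \<otimes>\<^bsub>G\<^esub> inv\<^bsub>G\<^esub> g)))"
    proof
      fix g assume g: "g \<in> carrier G"
      define L' where "L' = L \<inter> (inv\<^bsub>G\<^esub> g <#\<^bsub>G\<^esub> L #>\<^bsub>G\<^esub> inv\<^bsub>G\<^esub> (inv\<^bsub>G\<^esub> g))"
      have fi: "finite_index_in G L' L" unfolding L'_def using hk[of "inv\<^bsub>G\<^esub> g"] g by simp
      have "g \<otimes>\<^bsub>G\<^esub> h \<otimes>\<^bsub>G\<^esub> inv\<^bsub>G\<^esub> g \<in> L \<and> D g (vr (\<phi> h)) = vr (\<phi> (g \<otimes>\<^bsub>G\<^esub> h \<otimes>\<^bsub>G\<^esub> inv\<^bsub>G\<^esub> g))"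
        if h: "h \<in> L'" for h
      proof -
        have hL: "h \<in> L" using h L'_def by simp
        obtain l where l: "l \<in> L" "h = inv\<^bsub>G\<^esub> g \<otimes>\<^bsub>G\<^esub> l \<otimes>\<^bsub>G\<^esub> g"
          using h g coset_mem unfolding L'_def by fastforce
        have "g \<otimes>\<^bsub>G\<^esub> h \<otimes>\<^bsub>G\<^esub> inv\<^bsub>G\<^esub> g = l"
          using l g Lsub[OF l(1)] by (simp add: G.m_assoc[symmetric]) (simp add: G.m_assoc)
        then have c: "g \<otimes>\<^bsub>G\<^esub> h \<otimes>\<^bsub>G\<^esub> inv\<^bsub>G\<^esub> g \<in> L" using l by simp
        then show ?thesis using P1[OF g hL c] by simp
      qed
      then show "\<exists>L'. finite_index_in G L' L \<and>
            (\<forall>h\<in>L'. g \<otimes>\<^bsub>G\<^esub> h \<otimes>\<^bsub>G\<^esub> inv\<^bsub>G\<^esub> g \<in> L \<and>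
                     D g (vr (\<phi> h)) = vr (\<phi> (g \<otimes>\<^bsub>G\<^esub> h \<otimes>\<^bsub>G\<^esub> inv\<^bsub>G\<^esub> g)))"
        using fi by blast
    qed
  qed
qed

end
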